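(* Let $u:\mathbb{R}\to[0,K]$ have compact support and finite variation, and be a.e. $\mathcal{R}$-valued, and let $\delta>0$. Then for all sufficiently small $\varepsilon>0$ there exists a piecewise constant $\mathcal{R}$-valued function $u^{\varepsilon,\delta}$ with compact support and step lengths at least $\varepsilon$ such that $\Delta(u^{\varepsilon,\delta},u)\le\varepsilon\delta$.
   Context: $\mathcal{R}$ is the set of densities $\{\nu[\eta(0)]\}$ of the extremal invariant shift-invariant probability measures $\nu$ of the particle system on $\{0,\dots,K\}^{\mathbb{Z}}$ with generator $Lf(\eta)=\sum_{x,y}p(y-x)b(\eta(x),\eta(y))[f(\eta^{x,y})-f(\eta)]$ ($\eta^{x,y}$: one particle moved from $x$ to $y$), where $p$ is a probability on $\mathbb{Z}$ whose support generates $\mathbb{Z}$ as a semigroup and which vanishes outside $[-M,M]$ for some $M$, and $b:\mathbb{Z}^+\times\mathbb{Z}^+\to\mathbb{R}^+$ satisfies $b(0,\cdot)=0$, $b(\cdot,K)=0$, $b(i,j)>0$ for $0<i\le K$, $0\le j<K$, and is nondecreasing in its first and nonincreasing in its second argument; $\mathcal{R}$ is a closed subset of $[0,K]$ containing $0$ and $K$. For integrable $u,v:\mathbb{R}\to[0,K]$, $\Delta(u,v)=\sup_{x\in\mathbb{R}}\left|\int_{-\infty}^x[u(y)-v(y)]dy\right|$. *)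

theory Defs
  imports "HOL-Analysis.Analysis"
begin

definition finite_variation :: "(real \<Rightarrow> real) \<Rightarrow> bool" where
  "finite_variation u \<longleftrightarrow>
     (\<exists>B. \<forall>(n::nat) (x::nat \<Rightarrow> real). (\<forall>i<n. x i \<le> x (Suc i)) \<longrightarrow>
         (\<Sum>i<n. \<bar>u (x (Suc i)) - u (x i)\<bar>) \<le> B)"

definition Delta :: "(real \<Rightarrow> real) \<Rightarrow> (real \<Rightarrow> real) \<Rightarrow> real" where
  "Delta u v = (SUP x. \<bar>LINT y:{..x}|lborel. (u y - v y)\<bar>)"

definition step_function_R :: "real set \<Rightarrow> real \<Rightarrow> (real \<Rightarrow> real) \<Rightarrow> bool" where
  "step_function_R R eps v \<longleftrightarrow>
     (\<exists>(n::nat) (x::nat \<Rightarrow> real) (c::nat \<Rightarrow> real).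
        (\<forall>i<n. x i + eps \<le> x (Suc i)) \<and>
        (\<forall>i<n. c i \<in> R) \<and>
        (\<forall>i<n. \<forall>y. x i \<le> y \<and> y < x (Suc i) \<longrightarrow> v y = c i) \<and>
        (\<forall>y. y < x 0 \<or> x n \<le> y \<longrightarrow> v y = 0))"

end

theory Submission
  imports Defs
begin
lemma left_osc:
  fixes u :: "real \<Rightarrow> real"
  assumes fv: "finite_variation u" and eta: "\<eta> > 0"
  shows "\<exists>\<rho>>0. \<forall>y z. p - \<rho> < y \<and> y < p \<and> p - \<rho> < z \<and> z < p \<longrightarrow> \<bar>u y - u z\<bar> \<le> \<eta>"
proof (rule ccontr)
  assume H0: "\<not> ?thesis"
  have H: "\<exists>y z. p - \<rho> < y \<and> y < p \<and> p - \<rho> < z \<and> z < p \<and> \<bar>u y - u z\<bar> > \<eta>" if "\<rho> > 0" for \<rho>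
    using H0 that by (meson not_le)
  obtain B where B: "\<And>n x. (\<forall>i<n. x i \<le> x (Suc i)) \<Longrightarrow> (\<Sum>i<n. \<bar>u (x (Suc i)) - u (x i)\<bar>) \<le> B"
    using fv unfolding finite_variation_def by blast
  have "\<forall>m. \<exists>st. m < p \<longrightarrow> m < fst st \<and> fst st < snd st \<and> snd st < p \<and> \<bar>u (snd st) - u (fst st)\<bar> > \<eta>"
  proof
    fix m
    show "\<exists>st. m < p \<longrightarrow> m < fst st \<and> fst st < snd st \<and> snd st < p \<and> \<bar>u (snd st) - u (fst st)\<bar> > \<eta>"
    proof (cases "m < p")
      case True
      then obtain y z where yz: "p - (p - m) < y" "y < p" "p - (p - m) < z" "z < p" "\<bar>u y - u z\<bar> > \<eta>"
        using H[of "p - m"] by auto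
      then have "y \<noteq> z" using eta by auto
      show ?thesis
      proof (cases "y < z")
        case True
        then show ?thesis using yz by (intro exI[of _ "(y, z)"]) (auto simp: abs_minus_commute)
      next
        case False
        then show ?thesis using yz \<open>y \<noteq> z\<close> by (intro exI[of _ "(z, y)"]) auto
      qed
    qed simp
  qed
  from choice[OF this] obtain F where F0: "\<forall>m. m < p \<longrightarrow> m < fst (F m) \<and> fst (F m) < snd (F m) \<and> snd (F m) < p \<and> \<bar>u (snd (F m)) - u (fst (F m))\<bar> > \<eta>"
    by blast
  have F: "\<And>m. m < p \<Longrightarrow> m < fst (F m) \<and> fst (F m) < snd (F m) \<and> snd (F m) < p \<and> \<bar>u (snd (F m)) - u (fst (F m))\<bar> > \<eta>"
    using F0 by blast
  define mm where "mm = rec_nat (p - 1) (\<lambda>_ m. snd (F m))"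
  have mm0: "mm 0 = p - 1" and mmS: "\<And>k. mm (Suc k) = snd (F (mm k))" by (simp_all add: mm_def)
  have mmp: "mm k < p" for k
    by (induction k) (auto simp: mm0 mmS F)
  define s where "s k = fst (F (mm k))" for k
  define t where "t k = snd (F (mm k))" for k
  have st: "s k < t k" "\<bar>u (t k) - u (s k)\<bar> > \<eta>" "t k < s (Suc k)" for k
    using F[OF mmp[of k]] F[OF mmp[of "Suc k"]] by (auto simp: s_def t_def mmS)
  define x where "x i = (if even i then s (i div 2) else t (i div 2))" for i
  have mono: "x i \<le> x (Suc i)" for i
  proof (cases "even i")
    case True
    then show ?thesis using st(1)[of "i div 2"] by (auto simp: x_def)
  next
    case False
    then have "Suc i div 2 = Suc (i div 2)" by presburger
    then show ?thesis using False st(3)[of "i div 2"] by (auto simp: x_def)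
  qed
  have sum: "(\<Sum>i<2*n. \<bar>u (x (Suc i)) - u (x i)\<bar>) \<ge> n * \<eta>" for n
  proof (induction n)
    case (Suc n)
    have e: "2 * Suc n = Suc (Suc (2 * n))" by simp
    have "x (2*n) = s n" "x (Suc (2*n)) = t n" by (auto simp: x_def)
    then show ?case using Suc st(2)[of n] by (simp add: e algebra_simps)
  qed simp
  define n where "n = nat \<lceil>B / \<eta>\<rceil> + 1"
  have "real n * \<eta> > B"
  proof -
    have "real n > B / \<eta>" unfolding n_def by linarith
    then show ?thesis using eta by (simp add: field_simps)
  qed
  moreover have "(\<Sum>i<2*n. \<bar>u (x (Suc i)) - u (x i)\<bar>) \<le> B" using B[of "2*n" x] mono by blast
  ultimately show False using sum[of n] by linarith
qed

lemma fv_reflect: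
  assumes "finite_variation u"
  shows "finite_variation (\<lambda>x. u (- x))"
proof -
  obtain B where B: "\<And>n x. (\<forall>i<n. x i \<le> x (Suc i)) \<Longrightarrow> (\<Sum>i<n. \<bar>u (x (Suc i)) - u (x i)\<bar>) \<le> B"
    using assms unfolding finite_variation_def by blast
  show ?thesis unfolding finite_variation_def
  proof (intro exI allI impI)
    fix n and x :: "nat \<Rightarrow> real"
    assume m: "\<forall>i<n. x i \<le> x (Suc i)"
    define y where "y i = - x (n - i)" for i
    have my: "\<forall>i<n. y i \<le> y (Suc i)"
    proof (intro allI impI)
      fix i assume "i < n"
      then have "n - i = Suc (n - Suc i)" by simp
      then show "y i \<le> y (Suc i)" using m \<open>i < n\<close> by (auto simp: y_def)
    qed
    have "(\<Sum>i<n. \<bar>u (- x (Suc i)) - u (- x i)\<bar>) = (\<Sum>i<n. \<bar>u (- x (Suc (n - Suc i))) - u (- x (n - Suc i))\<bar>)"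
      by (rule sum.nat_diff_reindex[symmetric])
    also have "\<dots> = (\<Sum>i<n. \<bar>u (y (Suc i)) - u (y i)\<bar>)"
    proof (rule sum.cong)
      fix i assume "i \<in> {..<n}"
      then have "n - i = Suc (n - Suc i)" "n - Suc i = n - Suc i" by auto
      then show "\<bar>u (- x (Suc (n - Suc i))) - u (- x (n - Suc i))\<bar> = \<bar>u (y (Suc i)) - u (y i)\<bar>"
        by (simp add: y_def abs_minus_commute)
    qed simp
    also have "\<dots> \<le> B" using B my by blast
    finally show "(\<Sum>i<n. \<bar>u (- x (Suc i)) - u (- x i)\<bar>) \<le> B" .
  qed
qed

lemma osc_both:
  fixes u :: "real \<Rightarrow> real"
  assumes fv: "finite_variation u" and eta: "\<eta> > 0"
  shows "\<exists>\<rho>>0. \<forall>y z. ((p - \<rho> < y \<and> y < p \<and> p - \<rho> < z \<and> z < p) \<or> (p < y \<and> y < p + \<rho> \<and> p < z \<and> z < p + \<rho>))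
     \<longrightarrow> \<bar>u y - u z\<bar> \<le> \<eta>"
proof -
  obtain r1 where r1: "r1 > 0" "\<And>y z. p - r1 < y \<and> y < p \<and> p - r1 < z \<and> z < p \<Longrightarrow> \<bar>u y - u z\<bar> \<le> \<eta>"
    using left_osc[OF fv eta, of p] by blast
  obtain r2 where r2: "r2 > 0" "\<And>y z. - p - r2 < y \<and> y < - p \<and> - p - r2 < z \<and> z < - p \<Longrightarrow> \<bar>u (- y) - u (- z)\<bar> \<le> \<eta>"
    using left_osc[OF fv_reflect[OF fv] eta, of "- p"] by blast
  show ?thesis
  proof (intro exI[of _ "min r1 r2"] conjI allI impI)
    fix y z
    assume "(p - min r1 r2 < y \<and> y < p \<and> p - min r1 r2 < z \<and> z < p) \<or> (p < y \<and> y < p + min r1 r2 \<and> p < z \<and> z < p + min r1 r2)"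
    then show "\<bar>u y - u z\<bar> \<le> \<eta>"
    proof
      assume "p - min r1 r2 < y \<and> y < p \<and> p - min r1 r2 < z \<and> z < p"
      then have "p - r1 < y \<and> y < p \<and> p - r1 < z \<and> z < p" by auto
      then show ?thesis using r1(2)[of y z] by blast
    next
      assume "p < y \<and> y < p + min r1 r2 \<and> p < z \<and> z < p + min r1 r2"
      then have "- p - r2 < - y \<and> - y < - p \<and> - p - r2 < - z \<and> - z < - p" by auto
      then show ?thesis using r2(2)[of "- y" "- z"] by simp
    qed
  qed (use r1 r2 in auto)
qed

lemma cover_data:
  fixes u :: "real \<Rightarrow> real" and a b :: real
  assumes fv: "finite_variation u" and eta: "\<eta> > 0" and ab0: "a \<le> b"
  shows "\<exists>P lam. finite P \<and> P \<subseteq> {a..b} \<and> a \<in> P \<and> b \<in> P \<and> lam > 0 \<and>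
    (\<forall>s t. a \<le> s \<longrightarrow> t \<le> b \<longrightarrow> s < t \<longrightarrow> t - s < lam \<longrightarrow> (\<forall>q\<in>P. \<not> (s < q \<and> q < t)) \<longrightarrow>
       (\<forall>y z. s < y \<and> y < t \<and> s < z \<and> z < t \<longrightarrow> \<bar>u y - u z\<bar> \<le> \<eta>))"
proof -
  have "\<forall>p. \<exists>\<rho>. \<rho> > 0 \<and> (\<forall>y z. ((p - \<rho> < y \<and> y < p \<and> p - \<rho> < z \<and> z < p) \<or> (p < y \<and> y < p + \<rho> \<and> p < z \<and> z < p + \<rho>))
     \<longrightarrow> \<bar>u y - u z\<bar> \<le> \<eta>)"
    using osc_both[OF fv eta] by blast
  from choice[OF this] obtain rho where rho0: "\<forall>p. rho p > 0 \<and> (\<forall>y z. ((p - rho p < y \<and> y < p \<and> p - rho p < z \<and> z < p) \<or> (p < y \<and> y < p + rho p \<and> p < z \<and> z < p + rho p))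
     \<longrightarrow> \<bar>u y - u z\<bar> \<le> \<eta>)" by blast
  have rpos: "\<And>p. rho p > 0" using rho0 by blast
  have rosc: "\<And>p y z. (p - rho p < y \<and> y < p \<and> p - rho p < z \<and> z < p) \<or> (p < y \<and> y < p + rho p \<and> p < z \<and> z < p + rho p)
     \<Longrightarrow> \<bar>u y - u z\<bar> \<le> \<eta>" using rho0 by blast
  have "{a..b} \<subseteq> (\<Union>p\<in>{a..b}. ball p (rho p))" using rpos by force
  then obtain P0 where P0: "P0 \<subseteq> {a..b}" "finite P0" "{a..b} \<subseteq> (\<Union>p\<in>P0. ball p (rho p))"
    using compactE_image[OF compact_Icc, of "{a..b}" "\<lambda>p. ball p (rho p)" a b] by auto
  obtain e where e: "e > 0" "\<And>x. x \<in> {a..b} \<Longrightarrow> \<exists>G \<in> (\<lambda>p. ball p (rho p)) ` P0. ball x e \<subseteq> G"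
  proof (rule Heine_Borel_lemma[OF compact_Icc, of a b "(\<lambda>p. ball p (rho p)) ` P0"])
    show "{a..b} \<subseteq> \<Union> ((\<lambda>p. ball p (rho p)) ` P0)" using P0(3) by simp
  qed auto
  show ?thesis
  proof (cases "a \<le> b")
    case False
    then show ?thesis using ab0 by auto
  next
    case ab: True
  show ?thesis
  proof (intro exI[of _ "insert a (insert b P0)"] exI[of _ e] conjI allI impI)
    fix s t y z
    assume st: "a \<le> s" "t \<le> b" "s < t" "t - s < e" "\<forall>q\<in>insert a (insert b P0). \<not> (s < q \<and> q < t)"
      and yz: "s < y \<and> y < t \<and> s < z \<and> z < t"
    define m where "m = (s + t) / 2"
    have "m \<in> {a..b}" using st unfolding m_def by auto
    then obtain p where p: "p \<in> P0" "ball m e \<subseteq> ball p (rho p)" using e(2) by blast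
    have "y \<in> ball m e" "z \<in> ball m e" using yz st unfolding m_def by (auto simp: dist_real_def abs_less_iff field_simps)
    then have yb: "y \<in> ball p (rho p)" "z \<in> ball p (rho p)" using p(2) by auto
    have "\<not> (s < p \<and> p < t)" using st(5) p(1) by blast
    then have "p \<le> s \<or> t \<le> p" by auto
    then show "\<bar>u y - u z\<bar> \<le> \<eta>"
    proof
      assume "p \<le> s"
      then have "p < y \<and> y < p + rho p \<and> p < z \<and> z < p + rho p" using yb yz by (auto simp: dist_real_def)
      then show ?thesis using rosc by blast
    next
      assume "t \<le> p"
      then have "p - rho p < y \<and> y < p \<and> p - rho p < z \<and> z < p" using yb yz by (auto simp: dist_real_def)
      then show ?thesis using rosc by blast
    qed
  qed (use P0 e ab in auto)
  qed
qed

lemma si_int: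
  fixes f :: "real \<Rightarrow> real"
  assumes "integrable lborel f" "A \<in> sets borel"
  shows "set_integrable lborel A f" "integrable lborel (\<lambda>x. indicator A x * f x)"
    "set_borel_measurable lborel A f"
proof -
  show 1: "set_integrable lborel A f" unfolding set_integrable_def
    using integrable_mult_indicator[of A lborel f] assms by simp
  then show "integrable lborel (\<lambda>x. indicator A x * f x)" unfolding set_integrable_def by simp
  show "set_borel_measurable lborel A f" using 1 unfolding set_integrable_def set_borel_measurable_def
    by (rule borel_measurable_integrable)
qed

lemma si_const:
  fixes a b :: real
  assumes "a \<le> b"
  shows "set_integrable lborel {a<..<b} (\<lambda>_. c::real)" "set_integrable lborel {a<..b} (\<lambda>_. c::real)"
    "set_integrable lborel {a..<b} (\<lambda>_. c::real)"
  using assms by (auto simp: set_integrable_def)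

lemma lint_split:
  fixes f :: "real \<Rightarrow> real"
  assumes f: "integrable lborel f" and st: "s \<le> t"
  shows "(LINT y:{..t}|lborel. f y) = (LINT y:{..s}|lborel. f y) + (LINT y:{s<..t}|lborel. f y)"
proof -
  have e: "{..t} = {..s} \<union> {s<..t}" using st by auto
  show ?thesis unfolding e
    by (rule set_integral_Un) (auto intro!: si_int f)
qed

lemma lint_bound:
  fixes f :: "real \<Rightarrow> real"
  assumes f: "integrable lborel f" and st: "s \<le> t" and C: "C \<ge> 0"
    and b: "\<And>y. s < y \<Longrightarrow> y < t \<Longrightarrow> \<bar>f y\<bar> \<le> C"
  shows "\<bar>LINT y:{s<..t}|lborel. f y\<bar> \<le> C * (t - s)"
proof -
  have "(LINT y:{s<..t}|lborel. f y) = (LINT y:{s<..<t}|lborel. f y)"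
    by (rule set_integral_cong_set)
      (auto intro!: si_int f eventually_mono[OF AE_lborel_singleton[of t]])
  also have "\<bar>\<dots>\<bar> \<le> (\<integral>y. indicator {s<..<t} y * C \<partial>lborel)"
    unfolding set_lebesgue_integral_def
  proof (rule integral_abs_bound_integral)
    show "integrable lborel (\<lambda>x. indicat_real {s<..<t} x *\<^sub>R f x)" using si_int(2)[OF f, of "{s<..<t}"] by simp
    show "integrable lborel (\<lambda>y. indicat_real {s<..<t} y * C)"
      using si_int(2)[of "\<lambda>_. C" "{s<..<t}"] st by simp
  qed (auto simp: indicator_def b C)
  also have "\<dots> = C * (t - s)"
    using set_integral_const[of "{s<..<t}" lborel C] st
    by (simp add: set_lebesgue_integral_def mult.commute)
  finally show ?thesis .
qed

lemma below_avg:
  fixes u :: "real \<Rightarrow> real"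
  assumes u: "integrable lborel u" and uR: "AE x in lborel. u x \<in> R" and st: "s < t"
  shows "\<exists>y. s < y \<and> y < t \<and> u y \<in> R \<and> u y * (t - s) \<le> (LINT y:{s<..t}|lborel. u y)"
proof (rule ccontr)
  assume H: "\<not> ?thesis"
  define I where "I = (LINT y:{s<..t}|lborel. u y)"
  define A where "A = I / (t - s)"
  have I2: "I = (LINT y:{s<..<t}|lborel. u y)" unfolding I_def
    by (rule set_integral_cong_set)
      (auto intro!: si_int u eventually_mono[OF AE_lborel_singleton[of t]])
  define h where "h y = indicator {s<..<t} y * (u y - A)" for y
  have hi: "integrable lborel h"
  proof -
    have "integrable lborel (\<lambda>y. indicator {s<..<t} y * u y - indicator {s<..<t} y * A)"
      using si_int(2)[OF u, of "{s<..<t}"] si_int(2)[of "\<lambda>_. A" "{s<..<t}"] st by auto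
    then show ?thesis unfolding h_def by (simp add: algebra_simps)
  qed
  have hpos: "AE y in lborel. 0 \<le> h y"
    using uR
  proof eventually_elim
    case (elim y)
    show ?case
    proof (cases "s < y \<and> y < t")
      case True
      then have "u y * (t - s) > I" using H elim unfolding I_def by auto
      then have "u y > A" using st unfolding A_def by (simp add: field_simps)
      then show ?thesis using True by (simp add: h_def)
    qed (simp add: h_def)
  qed
  have "integral\<^sup>L lborel h = I - A * (t - s)"
  proof -
    have "integral\<^sup>L lborel h = (LINT y:{s<..<t}|lborel. (u y - A))"
      by (simp add: h_def[abs_def] set_lebesgue_integral_def)
    also have "\<dots> = (LINT y:{s<..<t}|lborel. u y) - (LINT y:{s<..<t}|lborel. A)"
      by (rule set_integral_diff) (auto intro!: si_int u si_const less_imp_le[OF st])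
    also have "(LINT y:{s<..<t}|lborel. A) = A * (t - s)"
      using set_integral_const[of "{s<..<t}" lborel A] st by simp
    finally show ?thesis using I2 by simp
  qed
  also have "\<dots> = 0" using st unfolding A_def by simp
  finally have "AE y in lborel. h y = 0" using integral_nonneg_eq_0_iff_AE[OF hi hpos] by simp
  then have "AE y in lborel. y \<notin> {s<..<t}"
    using uR
  proof eventually_elim
    case (elim y)
    show ?case
    proof
      assume yy: "y \<in> {s<..<t}"
      then have "u y * (t - s) > I" using H elim unfolding I_def by auto
      then have "u y > A" using st unfolding A_def by (simp add: field_simps)
      then show False using elim yy by (simp add: h_def)
    qed
  qed
  then have "emeasure lborel {s<..<t} = 0"
    by (subst (asm) AE_iff_measurable[of "{s<..<t}"]) auto
  then show False using st by simp
qed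

lemma above_avg:
  fixes u :: "real \<Rightarrow> real"
  assumes u: "integrable lborel u" and uR: "AE x in lborel. u x \<in> R" and st: "s < t"
  shows "\<exists>y. s < y \<and> y < t \<and> u y \<in> R \<and> u y * (t - s) \<ge> (LINT y:{s<..t}|lborel. u y)"
proof -
  have "AE x in lborel. - u x \<in> uminus ` R" using uR by eventually_elim auto
  from below_avg[OF _ this st] u obtain y where y: "s < y" "y < t" "- u y \<in> uminus ` R"
     "- u y * (t - s) \<le> (LINT y:{s<..t}|lborel. - u y)" by auto
  have neg: "(LINT y:{s<..t}|lborel. - u y) = - (LINT y:{s<..t}|lborel. u y)"
    using set_integral_uminus[OF si_int(1)[OF u, of "{s<..t}"]] by simp
  have "u y * (t - s) \<ge> (LINT y:{s<..t}|lborel. u y)" using y(4) neg by simp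
  with y show ?thesis by (intro exI[of _ y]) auto
qed

lemma lint_const:
  fixes f :: "real \<Rightarrow> real"
  assumes f: "integrable lborel f" and st: "s \<le> t"
    and b: "\<And>y. s < y \<Longrightarrow> y < t \<Longrightarrow> f y = c"
  shows "(LINT y:{s<..t}|lborel. f y) = c * (t - s)"
proof -
  have "(LINT y:{s<..t}|lborel. f y) = (LINT y:{s<..<t}|lborel. f y)"
    by (rule set_integral_cong_set)
      (auto intro!: si_int f eventually_mono[OF AE_lborel_singleton[of t]])
  also have "\<dots> = (LINT y:{s<..<t}|lborel. c)"
    by (rule set_lebesgue_integral_cong) (auto simp: b)
  also have "\<dots> = c * (t - s)"
    using set_integral_const[of "{s<..<t}" lborel c] st by simp
  finally show ?thesis .
qed

lemma lint_zero_below: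
  fixes f :: "real \<Rightarrow> real"
  assumes "\<And>y. y \<le> t \<Longrightarrow> f y = 0"
  shows "(LINT y:{..t}|lborel. f y) = 0"
proof -
  have "(\<lambda>y. indicator {..t} y *\<^sub>R f y) = (\<lambda>_. 0)"
    using assms by (auto simp: indicator_def)
  then show ?thesis unfolding set_lebesgue_integral_def by simp
qed

lemma cell_exists:
  fixes X :: "nat \<Rightarrow> real"
  shows "X 0 \<le> x \<Longrightarrow> x < X n \<Longrightarrow> \<exists>k<n. X k \<le> x \<and> x < X (Suc k)"
proof (induction n)
  case (Suc n)
  show ?case
  proof (cases "x < X n")
    case True
    then show ?thesis using Suc by (meson less_SucI)
  next
    case False
    then show ?thesis using Suc by auto
  qed
qed simp

lemma main_approx:
  fixes u :: "real \<Rightarrow> real" and X :: "nat \<Rightarrow> real" and n :: nat and \<epsilon> \<eta> :: real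
  assumes u: "integrable lborel u" and uR: "AE x in lborel. u x \<in> R"
    and eps: "\<epsilon> > 0" and eta: "\<eta> \<ge> 0"
    and zero: "\<And>y. y < X 0 \<or> X n < y \<Longrightarrow> u y = 0"
    and len: "\<And>k. X k + \<epsilon> \<le> X (Suc k) \<and> X (Suc k) \<le> X k + 2 * \<epsilon>"
    and osc: "\<And>k y z. k < n \<Longrightarrow> X k < y \<Longrightarrow> y < X (Suc k) \<Longrightarrow> X k < z \<Longrightarrow> z < X (Suc k) \<Longrightarrow> \<bar>u y - u z\<bar> \<le> \<eta>"
  shows "\<exists>v. step_function_R R \<epsilon> v \<and> Delta v u \<le> 4 * \<epsilon> * \<eta>"
proof -
  have smX: "strict_mono X" unfolding strict_mono_Suc_iff using len eps by (metis add_strict_left_mono add.right_neutral order_less_le_trans)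
  have Xle: "j \<le> k \<Longrightarrow> X j \<le> X k" for j k using smX by (simp add: strict_mono_less_eq)
  have Xlt: "j < k \<Longrightarrow> X j < X k" for j k using smX by (simp add: strict_mono_less)
  define l where "l k = X (Suc k) - X k" for k
  define I where "I k = (LINT y:{X k<..X (Suc k)}|lborel. u y)" for k
  have lpos: "l k \<ge> \<epsilon>" "l k \<le> 2 * \<epsilon>" for k using len[of k] by (auto simp: l_def)
  have "\<forall>k. \<exists>y. X k < y \<and> y < X (Suc k) \<and> u y \<in> R \<and> u y * l k \<le> I k"
    using below_avg[OF u uR] Xlt unfolding l_def I_def by blast
  from choice[OF this] obtain y1 where y1: "\<And>k. X k < y1 k \<and> y1 k < X (Suc k) \<and> u (y1 k) \<in> R \<and> u (y1 k) * l k \<le> I k"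
    by blast
  have "\<forall>k. \<exists>y. X k < y \<and> y < X (Suc k) \<and> u y \<in> R \<and> u y * l k \<ge> I k"
    using above_avg[OF u uR] Xlt unfolding l_def I_def by blast
  from choice[OF this] obtain y2 where y2: "\<And>k. X k < y2 k \<and> y2 k < X (Suc k) \<and> u (y2 k) \<in> R \<and> u (y2 k) * l k \<ge> I k"
    by blast
  define D where "D = rec_nat 0 (\<lambda>k d. d + ((if d \<ge> 0 then u (y1 k) else u (y2 k)) * l k - I k))"
  define c where "c k = (if D k \<ge> 0 then u (y1 k) else u (y2 k))" for k
  have D0: "D 0 = 0" and DS: "\<And>k. D (Suc k) = D k + (c k * l k - I k)"
    by (simp_all add: D_def c_def)
  have cR: "c k \<in> R" for k using y1 y2 by (simp add: c_def)
  have cosc: "\<bar>c k - u y\<bar> \<le> \<eta>" if "k < n" "X k < y" "y < X (Suc k)" for k y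
    using osc[OF that(1) _ _ that(2,3), of "y1 k"] osc[OF that(1) _ _ that(2,3), of "y2 k"] y1[of k] y2[of k]
    by (auto simp: c_def)
  have Dbound: "k \<le> n \<Longrightarrow> \<bar>D k\<bar> \<le> 2 * \<epsilon> * \<eta>" for k
  proof (induction k)
    case 0
    then show ?case using eps eta by (simp add: D0)
  next
    case (Suc k)
    then have kn: "k < n" and IH: "\<bar>D k\<bar> \<le> 2 * \<epsilon> * \<eta>" by auto
    have d21: "u (y2 k) - u (y1 k) \<le> \<eta>" using osc[OF kn, of "y2 k" "y1 k"] y1[of k] y2[of k] by auto
    have "(u (y2 k) - u (y1 k)) * l k \<le> \<eta> * l k" using d21 lpos[of k] eps by (intro mult_right_mono) auto
    also have "\<eta> * l k \<le> \<eta> * (2 * \<epsilon>)" using lpos[of k] eta by (intro mult_left_mono) auto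
    finally have w: "u (y2 k) * l k - u (y1 k) * l k \<le> 2 * \<epsilon> * \<eta>" by (simp add: algebra_simps)
    show ?case
    proof (cases "D k \<ge> 0")
      case True
      then have "c k = u (y1 k)" by (simp add: c_def)
      then show ?thesis using True IH y1[of k] y2[of k] w eps eta by (simp add: DS abs_le_iff; linarith)
    next
      case False
      then have "c k = u (y2 k)" by (simp add: c_def)
      then show ?thesis using False IH y1[of k] y2[of k] w eps eta by (simp add: DS abs_le_iff; linarith)
    qed
  qed
  define v where "v y = (\<Sum>k<n. c k * indicator {X k..<X (Suc k)} y)" for y
  have v_cell: "v y = c i" if "i < n" "X i \<le> y" "y < X (Suc i)" for i y
  proof -
    have "v y = (\<Sum>k<n. if k = i then c k else 0)"
      unfolding v_def
    proof (rule sum.cong)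
      fix k assume k: "k \<in> {..<n}"
      show "c k * indicator {X k..<X (Suc k)} y = (if k = i then c k else 0)"
      proof (cases "k = i")
        case False
        then have "k < i \<or> i < k" by auto
        then have "y \<notin> {X k..<X (Suc k)}"
        proof
          assume "k < i" then have "X (Suc k) \<le> X i" using Xle by auto
          then show ?thesis using that by auto
        next
          assume "i < k" then have "X (Suc i) \<le> X k" using Xle by auto
          then show ?thesis using that by auto
        qed
        then show ?thesis using False by simp
      qed (use that in auto)
    qed simp
    also have "\<dots> = c i" using that(1) by simp
    finally show ?thesis .
  qed
  have v_out: "v y = 0" if "y < X 0 \<or> X n \<le> y" for y
    unfolding v_def
  proof (rule sum.neutral, intro ballI)
    fix k assume "k \<in> {..<n}"
    then have "X 0 \<le> X k" "X (Suc k) \<le> X n" using Xle by auto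
    then show "c k * indicator {X k..<X (Suc k)} y = 0" using that by auto
  qed
  have sf: "step_function_R R \<epsilon> v"
    unfolding step_function_R_def
    by (intro exI[of _ n] exI[of _ X] exI[of _ c]) (use len cR v_cell v_out in auto)
  have ik: "integrable lborel (\<lambda>y. c k * indicator {X k..<X (Suc k)} y)" for k
    using si_const(3)[of "X k" "X (Suc k)" "c k"] Xle[of k "Suc k"] by (simp add: set_integrable_def mult.commute)
  have vint: "integrable lborel v"
    unfolding v_def by (rule Bochner_Integration.integrable_sum[OF ik])
  define f where "f y = v y - u y" for y
  have fint: "integrable lborel f" unfolding f_def using vint u by auto
  define G where "G x = (LINT y:{..x}|lborel. f y)" for x
  have Gsplit: "s \<le> t \<Longrightarrow> G t = G s + (LINT y:{s<..t}|lborel. f y)" for s t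
    unfolding G_def by (rule lint_split[OF fint])
  have Gbelow: "G x = 0" if "x \<le> X 0" for x
  proof -
    have "G (x - 1) = 0" unfolding G_def
      by (rule lint_zero_below) (use that v_out zero in \<open>auto simp: f_def\<close>)
    moreover have "\<bar>LINT y:{x - 1<..x}|lborel. f y\<bar> \<le> 0 * (x - (x - 1))"
      by (rule lint_bound[OF fint]) (use that v_out zero in \<open>auto simp: f_def\<close>)
    ultimately show ?thesis using Gsplit[of "x - 1" x] by simp
  qed
  have fcell: "f y = c k - u y" if "k < n" "X k < y" "y < X (Suc k)" for k y
    using v_cell[of k y] that by (simp add: f_def)
  have GD: "k \<le> n \<Longrightarrow> G (X k) = D k" for k
  proof (induction k)
    case 0
    then show ?case using Gbelow D0 by simp
  next
    case (Suc k)
    then have kn: "k < n" by simp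
    have "(LINT y:{X k<..X (Suc k)}|lborel. f y) = (LINT y:{X k<..X (Suc k)}|lborel. v y) - I k"
      unfolding f_def I_def by (rule set_integral_diff) (auto intro!: si_int vint u)
    also have "(LINT y:{X k<..X (Suc k)}|lborel. v y) = c k * l k"
      unfolding l_def by (rule lint_const[OF vint]) (use Xle v_cell kn in auto)
    finally have "(LINT y:{X k<..X (Suc k)}|lborel. f y) = c k * l k - I k" .
    then show ?case using Gsplit[of "X k" "X (Suc k)"] Suc Xle[of k "Suc k"] by (simp add: DS)
  qed
  have Gb: "\<bar>G x\<bar> \<le> 4 * \<epsilon> * \<eta>" for x
  proof (cases "x \<le> X 0")
    case True
    then show ?thesis using Gbelow eps eta by simp
  next
    case F0: False
    show ?thesis
    proof (cases "x < X n")
      case True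
      then obtain k where k: "k < n" "X k \<le> x" "x < X (Suc k)" using cell_exists[of X x n] F0 by auto
      have "\<bar>LINT y:{X k<..x}|lborel. f y\<bar> \<le> \<eta> * (x - X k)"
        by (rule lint_bound[OF fint]) (use k eta fcell cosc in auto)
      also have "\<eta> * (x - X k) \<le> \<eta> * (2 * \<epsilon>)"
        using k len[of k] eta by (intro mult_left_mono) auto
      finally have "\<bar>LINT y:{X k<..x}|lborel. f y\<bar> \<le> 2 * \<epsilon> * \<eta>" by (simp add: mult_ac)
      moreover have "\<bar>G (X k)\<bar> \<le> 2 * \<epsilon> * \<eta>" using GD[of k] Dbound[of k] k by simp
      ultimately show ?thesis using Gsplit[of "X k" x] k by simp
    next
      case False
      have "\<bar>LINT y:{X n<..x}|lborel. f y\<bar> \<le> 0 * (x - X n)"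
        by (rule lint_bound[OF fint]) (use False v_out zero in \<open>auto simp: f_def\<close>)
      moreover have "\<bar>G (X n)\<bar> \<le> 2 * \<epsilon> * \<eta>" using GD[of n] Dbound[of n] by simp
      ultimately show ?thesis using Gsplit[of "X n" x] False eps eta by simp
    qed
  qed
  have "Delta v u \<le> 4 * \<epsilon> * \<eta>"
    unfolding Delta_def by (rule cSUP_least) (use Gb in \<open>auto simp: G_def f_def\<close>)
  then show ?thesis using sf by blast
qed



lemma partition_exists:
  fixes P :: "real set" and a b \<epsilon> :: real
  assumes P: "finite P" "P \<subseteq> {a..b}" "a \<in> P" "b \<in> P" and eps: "\<epsilon> > 0"
    and gap: "\<And>p q. p \<in> P \<Longrightarrow> q \<in> P \<Longrightarrow> p \<noteq> q \<Longrightarrow> 2 * \<epsilon> < \<bar>p - q\<bar>"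
  shows "\<exists>X n. X 0 = a \<and> b \<le> X n \<and> (\<forall>k. X k + \<epsilon> \<le> X (Suc k) \<and> X (Suc k) < X k + 2 * \<epsilon> \<and>
     (\<forall>q\<in>P. \<not> (X k < q \<and> q < X (Suc k))) \<and> (X k < b \<longrightarrow> X (Suc k) \<le> b))"
proof -
  define nxt where "nxt x = (if {q\<in>P. x < q} = {} then x + \<epsilon> else
     (if Min {q\<in>P. x < q} - x < 2 * \<epsilon> then Min {q\<in>P. x < q} else x + \<epsilon>))" for x
  define Inv where "Inv x \<longleftrightarrow> x \<in> P \<or> (\<forall>q\<in>P. x < q \<longrightarrow> x + \<epsilon> \<le> q)" for x
  have step: "x + \<epsilon> \<le> nxt x \<and> nxt x < x + 2 * \<epsilon> \<and> (\<forall>q\<in>P. \<not> (x < q \<and> q < nxt x)) \<and>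
     (x < b \<longrightarrow> nxt x \<le> b) \<and> Inv (nxt x)" if I: "Inv x" for x
  proof (cases "{q\<in>P. x < q} = {}")
    case True
    then show ?thesis using eps P(4) by (auto simp: nxt_def Inv_def)
  next
    case False
    define m where "m = Min {q\<in>P. x < q}"
    have fin: "finite {q\<in>P. x < q}" using P(1) by simp
    have m: "m \<in> P" "x < m" using Min_in[OF fin False] unfolding m_def by auto
    have mle: "\<And>q. q \<in> P \<Longrightarrow> x < q \<Longrightarrow> m \<le> q" unfolding m_def using fin by (intro Min_le) auto
    show ?thesis
    proof (cases "m - x < 2 * \<epsilon>")
      case True
      then have nx: "nxt x = m" using False unfolding nxt_def m_def by presburger
      have "x \<notin> P"
      proof
        assume "x \<in> P"
        then have "2 * \<epsilon> < \<bar>m - x\<bar>" using gap[of m x] m by auto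
        then show False using True m by auto
      qed
      then have "x + \<epsilon> \<le> m" using I m unfolding Inv_def by auto
      moreover have "\<forall>q\<in>P. \<not> (x < q \<and> q < m)" using mle by force
      moreover have "x < b \<longrightarrow> m \<le> b" using mle P(4) by auto
      ultimately show ?thesis using nx True m by (auto simp: Inv_def)
    next
      case F2: False
      then have nx: "nxt x = x + \<epsilon>" using False unfolding nxt_def m_def by presburger
      have "\<forall>q\<in>P. \<not> (x < q \<and> q < x + \<epsilon>)" using mle F2 eps by force
      moreover have "x < b \<longrightarrow> x + \<epsilon> \<le> b" using mle P(4) F2 eps by force
      moreover have "Inv (x + \<epsilon>)" unfolding Inv_def using mle F2 eps by force
      ultimately show ?thesis using nx eps by auto
    qed
  qed
  define X where "X = rec_nat a (\<lambda>_ x. nxt x)"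
  have X0: "X 0 = a" and XS: "\<And>k. X (Suc k) = nxt (X k)" by (simp_all add: X_def)
  have XI: "Inv (X k)" for k
  proof (induction k)
    case (Suc k)
    then show ?case using step[OF Suc] by (simp add: XS)
  qed (simp add: X0 Inv_def P(3))
  have Xge: "X k \<ge> a + real k * \<epsilon>" for k
  proof (induction k)
    case (Suc k)
    then show ?case using step[OF XI[of k]] by (simp add: XS algebra_simps)
  qed (simp add: X0)
  define n where "n = nat \<lceil>(b - a) / \<epsilon>\<rceil>"
  have "real n \<ge> (b - a) / \<epsilon>" unfolding n_def by linarith
  then have "real n * \<epsilon> \<ge> b - a" using eps by (simp add: field_simps)
  then have "b \<le> X n" using Xge[of n] by linarith
  then show ?thesis using X0 step[OF XI] XS by (intro exI[of _ X] exI[of _ n]) auto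
qed


lemma gap_exists:
  fixes P :: "real set"
  assumes "finite P"
  shows "\<exists>g>0. \<forall>p\<in>P. \<forall>q\<in>P. p \<noteq> q \<longrightarrow> g \<le> \<bar>p - q\<bar>"
proof -
  define DS where "DS = (\<lambda>(p, q). \<bar>p - q\<bar>) ` {pq \<in> P \<times> P. fst pq \<noteq> snd pq}"
  have fin: "finite DS" unfolding DS_def using assms by auto
  show ?thesis
  proof (cases "DS = {}")
    case True
    then show ?thesis unfolding DS_def by (intro exI[of _ 1]) auto
  next
    case False
    have pos: "\<forall>d\<in>DS. d > 0" unfolding DS_def by auto
    have "Min DS > 0" using Min_in[OF fin False] pos by auto
    moreover have "\<forall>p\<in>P. \<forall>q\<in>P. p \<noteq> q \<longrightarrow> Min DS \<le> \<bar>p - q\<bar>"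
    proof (intro ballI impI)
      fix p q assume "p \<in> P" "q \<in> P" "p \<noteq> q"
      then have "\<bar>p - q\<bar> \<in> DS" unfolding DS_def by (intro image_eqI[of _ _ "(p, q)"]) auto
      then show "Min DS \<le> \<bar>p - q\<bar>" using fin by simp
    qed
    ultimately show ?thesis by blast
  qed
qed

theorem lemma5p5:
  fixes R :: "real set" and K :: nat and u :: "real \<Rightarrow> real" and \<delta> :: real
  assumes K: "K \<ge> 1"
    and R_closed: "closed R" and R_sub: "R \<subseteq> {0..real K}"
    and R0: "0 \<in> R" and RK: "real K \<in> R"
    and u_range: "\<And>x. 0 \<le> u x \<and> u x \<le> real K"
    and u_int: "integrable lborel u"
    and u_supp: "compact (closure {x. u x \<noteq> 0})"
    and u_bv: "finite_variation u"
    and u_R: "AE x in lborel. u x \<in> R"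
    and \<delta>: "\<delta> > 0"
  shows "\<exists>\<epsilon>0>0. \<forall>\<epsilon>. 0 < \<epsilon> \<and> \<epsilon> < \<epsilon>0 \<longrightarrow>
           (\<exists>v. step_function_R R \<epsilon> v \<and> Delta v u \<le> \<epsilon> * \<delta>)"
proof -
  obtain M where M: "\<And>x. x \<in> closure {x. u x \<noteq> 0} \<Longrightarrow> \<bar>x\<bar> \<le> M"
  proof -
    have "bounded (closure {x. u x \<noteq> 0})" using compact_imp_bounded[OF u_supp] .
    then obtain M0 where "\<forall>x\<in>closure {x. u x \<noteq> 0}. \<bar>x\<bar> \<le> M0" unfolding bounded_real by blast
    then show ?thesis using that by blast
  qed
  define a where "a = - \<bar>M\<bar>"
  define b where "b = \<bar>M\<bar>"
  have ab: "a \<le> b" unfolding a_def b_def by simp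
  have uz: "u y = 0" if "y < a \<or> b < y" for y
  proof (rule ccontr)
    assume "u y \<noteq> 0"
    then have "y \<in> {x. u x \<noteq> 0}" by simp
    then have "y \<in> closure {x. u x \<noteq> 0}" by (meson closure_subset subsetD)
    then have "\<bar>y\<bar> \<le> M" by (rule M)
    then have "- M \<le> y" "y \<le> M" by (simp_all add: abs_le_iff)
    moreover have "y < - \<bar>M\<bar> \<or> \<bar>M\<bar> < y" using that unfolding a_def b_def .
    ultimately show False by linarith
  qed
  define \<eta> where "\<eta> = \<delta> / 4"
  have eta: "\<eta> > 0" using \<delta> unfolding \<eta>_def by simp
  obtain P lam where P: "finite P" "P \<subseteq> {a..b}" "a \<in> P" "b \<in> P" "lam > 0"
    and cov: "\<And>s t. a \<le> s \<Longrightarrow> t \<le> b \<Longrightarrow> s < t \<Longrightarrow> t - s < lam \<Longrightarrow> (\<forall>q\<in>P. \<not> (s < q \<and> q < t)) \<Longrightarrow>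
       (\<forall>y z. s < y \<and> y < t \<and> s < z \<and> z < t \<longrightarrow> \<bar>u y - u z\<bar> \<le> \<eta>)"
    using cover_data[OF u_bv eta ab] by blast
  obtain g where g: "g > 0" "\<And>p q. p \<in> P \<Longrightarrow> q \<in> P \<Longrightarrow> p \<noteq> q \<Longrightarrow> g \<le> \<bar>p - q\<bar>"
    using gap_exists[OF P(1)] by blast
  show ?thesis
  proof (intro exI[of _ "min (lam / 2) (g / 2)"] conjI allI impI)
    show "min (lam / 2) (g / 2) > 0" using g P by simp
    fix \<epsilon> assume e: "0 < \<epsilon> \<and> \<epsilon> < min (lam / 2) (g / 2)"
    then have eps: "\<epsilon> > 0" and el: "2 * \<epsilon> < lam" and eg: "2 * \<epsilon> < g" by auto
    obtain X n where X: "X 0 = a" "b \<le> X n"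
      and Xs: "\<And>k. X k + \<epsilon> \<le> X (Suc k) \<and> X (Suc k) < X k + 2 * \<epsilon> \<and>
     (\<forall>q\<in>P. \<not> (X k < q \<and> q < X (Suc k))) \<and> (X k < b \<longrightarrow> X (Suc k) \<le> b)"
    proof -
      have gap2: "2 * \<epsilon> < \<bar>p - q\<bar>" if "p \<in> P" "q \<in> P" "p \<noteq> q" for p q
        using g(2)[OF that] eg by linarith
      show ?thesis using partition_exists[OF P(1-4) eps gap2] that by blast
    qed
    have Xa: "a \<le> X k" for k
    proof (induction k)
      case (Suc k) then show ?case using Xs[of k] eps by linarith
    qed (simp add: X)
    have "\<exists>v. step_function_R R \<epsilon> v \<and> Delta v u \<le> 4 * \<epsilon> * \<eta>"
    proof (rule main_approx[OF u_int u_R eps less_imp_le[OF eta]])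
      show "u y = 0" if "y < X 0 \<or> X n < y" for y using that X uz by auto
      show "X k + \<epsilon> \<le> X (Suc k) \<and> X (Suc k) \<le> X k + 2 * \<epsilon>" for k using Xs[of k] by auto
      show "\<bar>u y - u z\<bar> \<le> \<eta>" if "k < n" "X k < y" "y < X (Suc k)" "X k < z" "z < X (Suc k)" for k y z
      proof (cases "X k < b")
        case True
        then have "X (Suc k) \<le> b" using Xs[of k] by blast
        moreover have "X (Suc k) - X k < lam" using Xs[of k] el by auto
        moreover have "X k < X (Suc k)" using Xs[of k] eps by auto
        ultimately show ?thesis using cov[of "X k" "X (Suc k)"] Xa[of k] Xs[of k] that by blast
      next
        case False
        then show ?thesis using that uz eta by auto
      qed
    qed
    then show "\<exists>v. step_function_R R \<epsilon> v \<and> Delta v u \<le> \<epsilon> * \<delta>"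
      unfolding \<eta>_def by (simp add: mult_ac)
  qed
qed

end
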